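(* Let $p_1<p_2<\cdots$ be the rational primes. For each $N$, let $\{Z_i^k: i\ge1,\ 1\le k\le N\}$ be independent Bernoulli random variables with $\mathbb{P}[Z_i^k=1]=1/p_i$, and define \[ \Delta'_N:=\max_{1\le k<j\le N}\ \max_i\ Z_i^jZ_i^k\log p_i . \] Fix $\delta\in(0,\infty)$ and let $\varphi_N=\varphi_N[\delta]$ be defined as below. Then \[ \liminf_{N\to\infty}\mathbb{P}\big[\Delta'_N\ge\log\varphi_N[\delta]\big]\ge 1-e^{-\delta}. \]
   Context: For $\delta\in(0,\infty)$ and $N\ge1$, $\varphi_N=\varphi_N[\delta]>1$ is the unique real number satisfying $\int_{\varphi_N}^{2\varphi_N}\frac{N^2\,dx}{2x^2\log x}=\delta$. *)

theory Defs
  imports "HOL-Probability.Probability" "HOL-Computational_Algebra.Primes"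
begin

text \<open>The i-th rational prime, 1-based: p 1 = 2, p 2 = 3, ...\<close>
definition pr :: "nat \<Rightarrow> nat" where
  "pr i = enumerate {p::nat. prime p} (i - 1)"

definition phiN :: "real \<Rightarrow> nat \<Rightarrow> real" where
  "phiN \<delta> N = (THE \<phi>. \<phi> > 1 \<and>
      integral {\<phi>..2*\<phi>} (\<lambda>x. (real N)^2 / (2 * x^2 * ln x)) = \<delta>)"

definition DeltaN' :: "nat \<Rightarrow> (nat \<Rightarrow> nat \<Rightarrow> 'a \<Rightarrow> real) \<Rightarrow> 'a \<Rightarrow> ereal" where
  "DeltaN' N Z \<omega> = (SUP (k, j, i) \<in> {(k, j, i). 1 \<le> k \<and> k < j \<and> j \<le> N \<and> 1 \<le> i}.
      ereal (Z i j \<omega> * Z i k \<omega> * ln (real (pr i))))"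

end

theory Submission
  imports Defs "HOL-Number_Theory.Prime_Powers" "HOL-Real_Asymp.Real_Asymp"
begin

definition Sf :: "nat \<Rightarrow> real" where "Sf m = (\<Sum>k=1..m. ln (real k))"
definition psiC :: "nat \<Rightarrow> real" where "psiC n = (\<Sum>d=1..n. mangoldt d)"

lemma Sf_Suc: "Sf (Suc m) = Sf m + ln (real (Suc m))"
  by (simp add: Sf_def)

lemma ln_step_upper: "m \<ge> 1 \<Longrightarrow> ln (real m + 1) - ln (real m) \<le> 1 / real m"
proof -
  assume m: "m \<ge> 1"
  have "ln (1 + 1/real m) \<le> 1 / real m" by (rule ln_add_one_self_le_self) simp
  moreover have "1 + 1/real m = (real m + 1)/real m" using m by (simp add: field_simps)
  moreover have "ln ((real m + 1)/real m) = ln (real m + 1) - ln (real m)"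
    using m by (simp add: ln_div)
  ultimately show ?thesis by simp
qed

lemma ln_step_lower: "m \<ge> 1 \<Longrightarrow> 1 / (real m + 1) \<le> ln (real m + 1) - ln (real m)"
proof -
  assume m: "m \<ge> 1"
  have "ln (1 + (- 1/(real m + 1))) \<le> - 1 / (real m + 1)"
    by (rule ln_add_one_self_le_self2) (use m in \<open>simp add: field_simps\<close>)
  moreover have "1 + (- 1/(real m + 1)) = real m / (real m + 1)" using m by (simp add: field_simps)
  moreover have "ln (real m / (real m + 1)) = ln (real m) - ln (real m + 1)"
    using m by (simp add: ln_div)
  ultimately show ?thesis by simp
qed

lemma Sf_bounds: "m \<ge> 1 \<Longrightarrow> real m * ln (real m) - real m + 1 \<le> Sf m \<and> Sf m \<le> real m * ln (real m) - real m + 1 + ln (real m)"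
proof (induction m rule: dec_induct)
  case base
  then show ?case by (simp add: Sf_def)
next
  case (step m)
  have u: "ln (real m + 1) - ln (real m) \<le> 1 / real m" using step ln_step_upper by simp
  have l: "1 / (real m + 1) \<le> ln (real m + 1) - ln (real m)" using step ln_step_lower by simp
  have m0: "real m \<ge> 1" using step by simp
  have u2: "real m * (ln (real m + 1) - ln (real m)) \<le> 1"
    using mult_left_mono[OF u, of "real m"] m0 by simp
  have l2: "1 \<le> (real m + 1) * (ln (real m + 1) - ln (real m))"
    using mult_left_mono[OF l, of "real m + 1"] m0 by simp
  show ?case using step.IH u2 l2 by (simp add: Sf_Suc algebra_simps)
qed


lemma Sf_mangoldt: "Sf m = (\<Sum>d=1..m. mangoldt d * real (m div d))"
proof (induction m)
  case 0 then show ?case by (simp add: Sf_def)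
next
  case (Suc m)
  have dv: "{d. d dvd Suc m} = {d\<in>{1..Suc m}. d dvd Suc m}"
  proof (intro Collect_cong iffI)
    fix d assume "d dvd Suc m"
    moreover from this have "d \<noteq> 0" by (metis dvd_0_left_iff nat.distinct(1))
    ultimately show "d \<in> {1..Suc m} \<and> d dvd Suc m" by (auto dest: dvd_imp_le)
  qed auto
  have "(\<Sum>d=1..Suc m. mangoldt d * real (Suc m div d)) =
        (\<Sum>d=1..Suc m. mangoldt d * real (m div d) + (if d dvd Suc m then mangoldt d else 0))"
    by (intro sum.cong refl) (auto simp: div_Suc dvd_eq_mod_eq_0 algebra_simps)
  also have "\<dots> = (\<Sum>d=1..Suc m. mangoldt d * real (m div d)) + (\<Sum>d=1..Suc m. (if d dvd Suc m then mangoldt d else 0))"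
    by (simp add: sum.distrib)
  also have "(\<Sum>d=1..Suc m. mangoldt d * real (m div d)) = (\<Sum>d=1..m. mangoldt d * real (m div d))"
    by (subst sum.cl_ivl_Suc) simp
  also have "(\<Sum>d=1..Suc m. (if d dvd Suc m then mangoldt d else 0)) = (\<Sum>d | d dvd Suc m. mangoldt d)"
    unfolding dv by (rule sum.inter_filter[symmetric]) simp
  also have "\<dots> = ln (real (Suc m))" using mangoldt_sum[of "Suc m", where 'a=real] by simp
  finally show ?case using Suc by (simp add: Sf_Suc)
qed

lemma Sf_mangoldt': "m \<le> N \<Longrightarrow> Sf m = (\<Sum>d=1..N. mangoldt d * real (m div d))"
proof -
  assume "m \<le> N"
  hence "(\<Sum>d=1..N. mangoldt d * real (m div d)) = (\<Sum>d=1..m. mangoldt d * real (m div d))"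
    by (intro sum.mono_neutral_right) auto
  thus ?thesis by (simp add: Sf_mangoldt)
qed


definition ttC :: "nat \<Rightarrow> int" where
  "ttC m = int m - int (m div 2) - int (m div 3) - int (m div 5) + int (m div 30)"

lemma tt_small_aux: "\<forall>v\<in>set [0..<30]. ttC v \<in> {0,1}"
  unfolding ttC_def by code_simp

lemma tt_small: "v < 30 \<Longrightarrow> ttC v \<in> {0,1}"
  using tt_small_aux by simp

lemma tt_periodic: "ttC (30*u + v) = ttC v"
proof -
  have "(30*u+v) div 2 = 15*u + v div 2" by simp
  moreover have "(30*u+v) div 3 = 10*u + v div 3" by simp
  moreover have "(30*u+v) div 5 = 6*u + v div 5" by simp
  moreover have "(30*u+v) div 30 = u + v div 30" by simp
  ultimately show ?thesis unfolding ttC_def by simp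
qed

lemma tt_01: "ttC m \<in> {0,1}"
proof -
  have "m = 30*(m div 30) + m mod 30" by simp
  hence "ttC m = ttC (m mod 30)" by (metis tt_periodic)
  thus ?thesis using tt_small[of "m mod 30"] by simp
qed

lemma tt_one_aux: "\<forall>v\<in>set [1..<6]. ttC v = 1"
  unfolding ttC_def by code_simp

lemma tt_one: "1 \<le> m \<Longrightarrow> m \<le> 5 \<Longrightarrow> ttC m = 1"
  using tt_one_aux by simp

definition Ucheb :: "nat \<Rightarrow> real" where
  "Ucheb q = Sf (30*q) - Sf (15*q) - Sf (10*q) - Sf (6*q) + Sf q"

lemma div_comp: "(k::nat) > 0 \<Longrightarrow> (k*q*c) div d div k = (q*c) div d"
proof -
  assume k: "k > 0"
  have "(k*q*c) div d div k = (k*q*c) div (d*k)" by (rule div_mult2_eq[symmetric])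
  also have "\<dots> = (k*(q*c)) div (k*d)" by (simp add: mult.commute mult.left_commute)
  also have "\<dots> = (q*c) div d" using k by simp
  finally show ?thesis .
qed

lemma U_eq: "Ucheb q = (\<Sum>d=1..30*q. mangoldt d * real_of_int (ttC (30*q div d)))"
proof -
  have e2: "\<And>d. 30*q div d div 2 = 15*q div d" using div_comp[of 2 15 q] by (simp add: mult.assoc)
  have e3: "\<And>d. 30*q div d div 3 = 10*q div d" using div_comp[of 3 10 q] by (simp add: mult.assoc)
  have e5: "\<And>d. 30*q div d div 5 = 6*q div d" using div_comp[of 5 6 q] by (simp add: mult.assoc)
  have e30: "\<And>d. 30*q div d div 30 = q div d" using div_comp[of 30 1 q] by (simp add: mult.assoc)
  have "Ucheb q = (\<Sum>d=1..30*q. mangoldt d * real (30*q div d)) - (\<Sum>d=1..30*q. mangoldt d * real (15*q div d))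
     - (\<Sum>d=1..30*q. mangoldt d * real (10*q div d)) - (\<Sum>d=1..30*q. mangoldt d * real (6*q div d))
     + (\<Sum>d=1..30*q. mangoldt d * real (q div d))"
    unfolding Ucheb_def by (subst (1 2 3 4 5) Sf_mangoldt'[where N="30*q"]) auto
  also have "\<dots> = (\<Sum>d=1..30*q. mangoldt d * (real (30*q div d) - real (15*q div d) - real (10*q div d)
        - real (6*q div d) + real (q div d)))"
    by (simp add: sum_subtractf sum.distrib algebra_simps)
  also have "\<dots> = (\<Sum>d=1..30*q. mangoldt d * real_of_int (ttC (30*q div d)))"
    by (intro sum.cong refl) (simp add: ttC_def e2 e3 e5 e30)
  finally show ?thesis .
qed

lemma U_le_psi: "Ucheb q \<le> psiC (30*q)"
proof -
  have "Ucheb q \<le> (\<Sum>d=1..30*q. mangoldt d)"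
    unfolding U_eq
  proof (rule sum_mono)
    fix d
    have "real_of_int (ttC (30*q div d)) \<le> 1" using tt_01[of "30*q div d"] by auto
    thus "mangoldt d * real_of_int (ttC (30*q div d)) \<le> mangoldt d"
      using mangoldt_nonneg[of d] by (simp add: mult_left_le)
  qed
  thus ?thesis by (simp add: psiC_def)
qed

lemma psi_diff_le_U: "psiC (30*q) - psiC (5*q) \<le> Ucheb q"
proof -
  have split: "{1..30*q} = {1..5*q} \<union> {5*q+1..30*q}" by auto
  have "psiC (30*q) - psiC (5*q) = (\<Sum>d\<in>{5*q+1..30*q}. mangoldt d)"
    unfolding psiC_def split by (subst sum.union_disjoint) auto
  also have "\<dots> = (\<Sum>d\<in>{5*q+1..30*q}. mangoldt d * real_of_int (ttC (30*q div d)))"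
  proof (intro sum.cong refl)
    fix d assume d: "d \<in> {5*q+1..30*q}"
    have "0 < 30*q div d" using d by (simp add: div_greater_zero_iff)
    hence "1 \<le> 30*q div d" by simp
    moreover have "30*q div d \<le> 5"
    proof -
      have "30*q < 6*d" using d by auto
      hence "30*q div d < 6" by (simp add: div_less_iff_less_mult mult.commute)
      thus ?thesis by simp
    qed
    ultimately show "mangoldt d = mangoldt d * real_of_int (ttC (30*q div d))" by (simp add: tt_one)
  qed
  also have "\<dots> \<le> (\<Sum>d=1..30*q. mangoldt d * real_of_int (ttC (30*q div d)))"
  proof (intro sum_mono2)
    fix d
    have "0 \<le> ttC (30*q div d)" using tt_01[of "30*q div d"] by auto
    thus "0 \<le> mangoldt d * real_of_int (ttC (30*q div d))" by (simp add: mangoldt_nonneg)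
  qed auto
  finally show ?thesis by (simp add: U_eq)
qed


lemma ln_lower_pade: assumes "(x::real) \<ge> 1" shows "2*(x-1)/(x+1) \<le> ln x"
proof -
  let ?g = "\<lambda>x::real. ln x - 2*(x-1)/(x+1)"
  have "?g 1 \<le> ?g x"
  proof (rule DERIV_nonneg_imp_nondecreasing[OF assms])
    fix y :: real assume y1: "1 \<le> y" and y2: "y \<le> x"
    have y: "1 \<le> y \<and> y \<le> x" using y1 y2 by simp
    have "DERIV ?g y :> (1/y - 4/(y+1)^2)"
      using y by (auto intro!: derivative_eq_intros simp: field_simps power2_eq_square)
    moreover have "1/y - 4/(y+1)^2 = (y-1)^2/(y*(y+1)^2)" using y by (simp add: divide_simps) (simp add: power2_eq_square algebra_simps)
    moreover have "(y-1)^2/(y*(y+1)^2) \<ge> 0" using y by simp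
    ultimately show "\<exists>d. DERIV ?g y :> d \<and> 0 \<le> d" by auto
  qed
  thus ?thesis by simp
qed

lemma ln_upper_pade: assumes "(x::real) \<ge> 1" shows "ln x \<le> (x - 1/x)/2"
proof -
  let ?g = "\<lambda>x::real. (x - 1/x)/2 - ln x"
  have "?g 1 \<le> ?g x"
  proof (rule DERIV_nonneg_imp_nondecreasing[OF assms])
    fix y :: real assume y1: "1 \<le> y" and y2: "y \<le> x"
    have y: "1 \<le> y \<and> y \<le> x" using y1 y2 by simp
    have "DERIV ?g y :> ((1 + 1/y^2)/2 - 1/y)"
      using y by (auto intro!: derivative_eq_intros simp: field_simps power2_eq_square)
    moreover have "(1 + 1/y^2)/2 - 1/y = (y-1)^2/(2*y^2)" using y by (simp add: field_simps power2_eq_square; algebra)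
    moreover have "(y-1)^2/(2*y^2) \<ge> 0" using y by simp
    ultimately show "\<exists>d. DERIV ?g y :> d \<and> 0 \<le> d" by auto
  qed
  thus ?thesis by simp
qed

definition cA :: real where "cA = (14 * ln 2 + 9 * ln 3 + 5 * ln 5) / 30"

lemma cA_bounds: "0.921 \<le> cA \<and> cA \<le> 0.9218"
proof -
  define a where "a = ln (16/15::real)"
  define b where "b = ln (25/24::real)"
  define c where "c = ln (81/80::real)"
  have l2: "ln (2::real) > 0" and l3: "ln (3::real) > 0" and l5: "ln (5::real) > 0" by auto
  have "a = 4*ln 2 - ln 3 - ln 5"
  proof -
    have "ln (16/15::real) = ln 16 - ln 15" by (simp add: ln_div)
    moreover have "ln (16::real) = 4 * ln 2" using ln_realpow[of 2 4] by simp
    moreover have "ln (15::real) = ln 3 + ln 5" using ln_mult[of 3 5] by simp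
    ultimately show ?thesis unfolding a_def by simp
  qed
  moreover have "b = 2*ln 5 - 3*ln 2 - ln 3"
  proof -
    have "ln (25/24::real) = ln 25 - ln 24" by (simp add: ln_div)
    moreover have "ln (25::real) = 2 * ln 5" using ln_realpow[of 5 2] by simp
    moreover have "ln (24::real) = ln 8 + ln 3" using ln_mult[of 8 3] by simp
    moreover have "ln (8::real) = 3 * ln 2" using ln_realpow[of 2 3] by simp
    ultimately show ?thesis unfolding b_def by simp
  qed
  moreover have "c = 4*ln 3 - 4*ln 2 - ln 5"
  proof -
    have "ln (81/80::real) = ln 81 - ln 80" by (simp add: ln_div)
    moreover have "ln (81::real) = 4 * ln 3" using ln_realpow[of 3 4] by simp
    moreover have "ln (80::real) = ln 16 + ln 5" using ln_mult[of 16 5] by simp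
    moreover have "ln (16::real) = 4 * ln 2" using ln_realpow[of 2 4] by simp
    ultimately show ?thesis unfolding c_def by simp
  qed
  ultimately have e: "30 * cA = 277*a + 202*b + 122*c" unfolding cA_def by (simp add: algebra_simps)
  have "2*(16/15-1)/(16/15+1) \<le> a" unfolding a_def by (rule ln_lower_pade) simp
  moreover have "a \<le> (16/15 - 1/(16/15))/2" unfolding a_def by (rule ln_upper_pade) simp
  moreover have "2*(25/24-1)/(25/24+1) \<le> b" unfolding b_def by (rule ln_lower_pade) simp
  moreover have "b \<le> (25/24 - 1/(25/24))/2" unfolding b_def by (rule ln_upper_pade) simp
  moreover have "2*(81/80-1)/(81/80+1) \<le> c" unfolding c_def by (rule ln_lower_pade) simp
  moreover have "c \<le> (81/80 - 1/(81/80))/2" unfolding c_def by (rule ln_upper_pade) simp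
  ultimately show ?thesis using e by simp
qed


lemma U_bounds: assumes q: "q \<ge> 1"
  shows "30*cA*real q - 3*ln (30*real q) - 1 \<le> Ucheb q \<and> Ucheb q \<le> 30*cA*real q + 2*ln (30*real q)"
proof -
  define L where "L = ln (real q)"
  define x where "x = real q"
  have x1: "x \<ge> 1" using q unfolding x_def by simp
  have e30: "ln (30::real) = ln 2 + ln 3 + ln 5" using ln_mult[of "2*3" 5] ln_mult[of 2 3] by simp
  have e15: "ln (15::real) = ln 3 + ln 5" using ln_mult[of 3 5] by simp
  have e10: "ln (10::real) = ln 2 + ln 5" using ln_mult[of 2 5] by simp
  have e6: "ln (6::real) = ln 2 + ln 3" using ln_mult[of 2 3] by simp
  have m: "\<And>k::real. k \<ge> 1 \<Longrightarrow> ln (k*x) = ln k + L"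
    using x1 unfolding L_def x_def by (simp add: ln_mult)
  define F30 where "F30 = 30*x*(ln 30 + L) - 30*x"
  define F15 where "F15 = 15*x*(ln 15 + L) - 15*x"
  define F10 where "F10 = 10*x*(ln 10 + L) - 10*x"
  define F6 where "F6 = 6*x*(ln 6 + L) - 6*x"
  define F1 where "F1 = x*L - x"
  have S30: "F30 + 1 \<le> Sf (30*q)" "Sf (30*q) \<le> F30 + 1 + (ln 30 + L)"
    using Sf_bounds[of "30*q"] q m[of 30] unfolding x_def F30_def by simp_all
  have S15: "F15 + 1 \<le> Sf (15*q)" "Sf (15*q) \<le> F15 + 1 + (ln 15 + L)"
    using Sf_bounds[of "15*q"] q m[of 15] unfolding x_def F15_def by simp_all
  have S10: "F10 + 1 \<le> Sf (10*q)" "Sf (10*q) \<le> F10 + 1 + (ln 10 + L)"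
    using Sf_bounds[of "10*q"] q m[of 10] unfolding x_def F10_def by simp_all
  have S6: "F6 + 1 \<le> Sf (6*q)" "Sf (6*q) \<le> F6 + 1 + (ln 6 + L)"
    using Sf_bounds[of "6*q"] q m[of 6] unfolding x_def F6_def by simp_all
  have S1: "F1 + 1 \<le> Sf q" "Sf q \<le> F1 + 1 + L"
    using Sf_bounds[of "q"] q unfolding x_def L_def F1_def by simp_all
  have comb: "F30 - F15 - F10 - F6 + F1 = 30*cA*x"
    unfolding F30_def F15_def F10_def F6_def F1_def cA_def e30 e15 e10 e6 by (simp add: algebra_simps)
  have l30: "ln (30*x) = ln 30 + L" using m[of 30] by simp
  have lpos: "ln 6 \<ge> (0::real)" "ln 10 \<ge> (0::real)" "ln 15 \<ge> (0::real)" "ln 30 \<ge> (0::real)" "L \<ge> 0"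
    using x1 unfolding L_def x_def by auto
  have le: "ln 6 \<le> ln (30::real)" "ln 10 \<le> ln (30::real)" "ln 15 \<le> ln (30::real)" by auto
  show ?thesis unfolding Ucheb_def x_def[symmetric] l30 using S30 S15 S10 S6 S1 comb lpos le
    by (intro conjI) (smt (verit))+
qed

lemma div_bounds_nat: "(k::nat) > 0 \<Longrightarrow> n < k * (n div k + 1) \<and> k * (n div k) \<le> n"
proof -
  assume k: "k > 0"
  have "k * (n div k) + n mod k = n" by simp
  moreover have "n mod k < k" using k by simp
  ultimately have "n < k * (n div k) + k" "k * (n div k) \<le> n" by linarith+
  thus ?thesis by (simp add: algebra_simps)
qed

lemma psi_mono: "m \<le> n \<Longrightarrow> psiC m \<le> psiC n"
  unfolding psiC_def by (intro sum_mono2) (auto simp: mangoldt_nonneg)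

lemma psi_nonneg: "psiC n \<ge> 0"
  unfolding psiC_def by (intro sum_nonneg) (auto simp: mangoldt_nonneg)

lemma psi_lower30: "q \<ge> 1 \<Longrightarrow> psiC (30*q) \<ge> 30*cA*real q - 3*ln (30*real q) - 1"
  using U_bounds[of q] U_le_psi[of q] by linarith

lemma psi_upper_step: "q \<ge> 1 \<Longrightarrow> psiC (30*q) \<le> 30*cA*real q + 2*ln (30*real q) + psiC (5*q)"
  using U_bounds[of q] psi_diff_le_U[of q] by linarith

lemma psi_upper30: "\<exists>C. \<forall>q. psiC (30*q) \<le> 30*(111/100)*real q + C"
proof -
  have ev: "eventually (\<lambda>q::nat. 2*ln (30*real q) + 30*(111/100) \<le> (9/100) * real q) at_top"
    by real_asymp
  then obtain q1 where q1: "\<And>q. q \<ge> q1 \<Longrightarrow> 2*ln (30*real q) + 30*(111/100) \<le> (9/100) * real q"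
    by (auto simp: eventually_at_top_linorder)
  define q2 where "q2 = max q1 2"
  define C where "C = psiC (30*q2)"
  have "psiC (30*q) \<le> 30*(111/100)*real q + C" for q
  proof (induction q rule: less_induct)
    case (less q)
    show ?case
    proof (cases "q \<le> q2")
      case True
      hence "psiC (30*q) \<le> C" unfolding C_def by (intro psi_mono) simp
      thus ?thesis by simp
    next
      case False
      hence qq: "q \<ge> q1" "q \<ge> 2" unfolding q2_def by auto
      have lt: "q div 6 + 1 < q" using qq by linarith
      have "psiC (5*q) \<le> psiC (30*(q div 6 + 1))" using div_bounds_nat[of 6 q] by (intro psi_mono) linarith
      also have "\<dots> \<le> 30*(111/100)*real (q div 6 + 1) + C" using less.IH[OF lt] .
      also have "real (q div 6 + 1) \<le> real q / 6 + 1"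
        by (simp add: real_of_nat_div)
      hence "30*(111/100)*real (q div 6 + 1) + C \<le> 30*(111/100)*(real q / 6 + 1) + C" by simp
      finally have p5: "psiC (5*q) \<le> 30*(111/100)*(real q / 6 + 1) + C" .
      have "psiC (30*q) \<le> 30*cA*real q + 2*ln (30*real q) + psiC (5*q)"
        using psi_upper_step qq by simp
      moreover have "2*ln (30*real q) + 30*(111/100) \<le> (9/100) * real q" using q1 qq by simp
      moreover have "30*cA * real q \<le> 30*(9218/10000) * real q" using cA_bounds by (intro mult_right_mono) auto
      moreover have "real q \<ge> 0" by simp
      ultimately show ?thesis using p5 by (simp only: distrib_left)
    qed
  qed
  thus ?thesis by blast
qed

lemma psi_upper: "\<exists>C. \<forall>n. psiC n \<le> (111/100)*real n + C"
proof -
  obtain C where C: "\<And>q. psiC (30*q) \<le> 30*(111/100)*real q + C" using psi_upper30 by blast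
  have "psiC n \<le> (111/100) * real n + (C + 30*(111/100))" for n
  proof -
    have "psiC n \<le> psiC (30*(n div 30 + 1))" using div_bounds_nat[of 30 n] by (intro psi_mono) linarith
    also have "\<dots> \<le> 30*(111/100)*real (n div 30 + 1) + C" by (rule C)
    finally have 1: "psiC n \<le> 30*(111/100)*real (n div 30 + 1) + C" .
    have "real (n div 30 + 1) \<le> real n / 30 + 1" by (simp add: real_of_nat_div)
    hence "30*(111/100)*real (n div 30 + 1) \<le> 30*(111/100)*(real n / 30 + 1)" by (intro mult_left_mono) auto
    thus ?thesis using 1 by (simp only: distrib_left)
  qed
  thus ?thesis by blast
qed

lemma psi_lower: "n \<ge> 30 \<Longrightarrow> psiC n \<ge> cA * (real n - 30) - 3 * ln (real n) - 1"
proof -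
  assume n: "n \<ge> 30"
  define q where "q = n div 30"
  have q1: "q \<ge> 1" using n unfolding q_def by simp
  have "psiC n \<ge> psiC (30*q)" unfolding q_def by (intro psi_mono) simp
  moreover have "psiC (30*q) \<ge> 30*cA*real q - 3*ln (30*real q) - 1" using psi_lower30[OF q1] .
  moreover have "30 * real q \<ge> real n - 30"
  proof -
    have "n < 30*q + 30" unfolding q_def by linarith
    thus ?thesis by linarith
  qed
  moreover have "30 * real q \<le> real n" unfolding q_def by linarith
  moreover have "ln (30*real q) \<le> ln (real n)" using q1 \<open>30 * real q \<le> real n\<close> by simp
  moreover have "cA * (30 * real q) \<ge> cA * (real n - 30)"
    using cA_bounds \<open>30 * real q \<ge> real n - 30\<close> by (intro mult_left_mono) auto
  ultimately show ?thesis by (simp add: algebra_simps)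
qed


definition thetaC :: "nat \<Rightarrow> real" where
  "thetaC n = (\<Sum>k=1..n. if prime k then ln (real k) else 0)"

lemma theta_le_psi_diff:
  "psiC n - thetaC n = (\<Sum>k\<in>{k\<in>{1..n}. primepow k \<and> \<not> prime k}. mangoldt k)"
proof -
  have "psiC n - thetaC n = (\<Sum>k=1..n. (mangoldt k - (if prime k then ln (real k) else 0)))"
    unfolding psiC_def thetaC_def by (simp add: sum_subtractf)
  also have "\<dots> = (\<Sum>k=1..n. (if primepow k \<and> \<not> prime k then mangoldt k else 0))"
    by (intro sum.cong refl) (auto simp: mangoldt_def)
  also have "\<dots> = (\<Sum>k\<in>{k\<in>{1..n}. primepow k \<and> \<not> prime k}. mangoldt k)"
    by (rule sum.inter_filter[symmetric]) simp
  finally show ?thesis .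
qed

lemma card_nonprime_pp:
  assumes n: "n \<ge> 1"
  shows "real (card {k\<in>{1..n}. primepow k \<and> \<not> prime k}) \<le> sqrt (real n) * log 2 (real n)"
proof -
  define s where "s = nat \<lfloor>sqrt (real n)\<rfloor>"
  define L where "L = nat \<lfloor>log 2 (real n)\<rfloor>"
  have sub: "{k\<in>{1..n}. primepow k \<and> \<not> prime k} \<subseteq> (\<lambda>(p,m). p ^ m) ` ({1..s} \<times> {1..L})"
  proof
    fix k assume k: "k \<in> {k\<in>{1..n}. primepow k \<and> \<not> prime k}"
    then obtain p m where pm: "prime p" "m > 0" "k = p ^ m" unfolding primepow_def by auto
    have m2: "m \<ge> 2" using pm k by (cases "m = 1") auto
    have p2: "p \<ge> 2" using pm(1) prime_ge_2_nat by auto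
    have kn: "k \<le> n" using k by auto
    have "p^2 \<le> p^m" using m2 p2 by (intro power_increasing) auto
    hence "real p ^ 2 \<le> real n" using kn pm(3) by (metis of_nat_le_iff of_nat_power order_trans)
    hence "real p \<le> sqrt (real n)" by (simp add: real_le_rsqrt)
    hence ps: "p \<le> s" unfolding s_def by (simp add: le_nat_floor)
    have "2^m \<le> p^m" using p2 by (simp add: power_mono)
    hence "(2::real)^m \<le> real n" using kn pm(3) by (metis of_nat_le_iff of_nat_power order_trans of_nat_numeral)
    hence "real m \<le> log 2 (real n)" using n by (simp add: le_log_iff powr_realpow)
    hence mL: "m \<le> L" unfolding L_def by (simp add: le_nat_floor)
    show "k \<in> (\<lambda>(p,m). p ^ m) ` ({1..s} \<times> {1..L})"
      using ps mL pm p2 by (auto intro!: image_eqI[of _ _ "(p,m)"])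
  qed
  have "card {k\<in>{1..n}. primepow k \<and> \<not> prime k} \<le> card ((\<lambda>(p,m). p ^ m) ` ({1..s} \<times> {1..L}))"
    by (intro card_mono sub) auto
  also have "\<dots> \<le> card ({1..s} \<times> {1..L})" by (rule card_image_le) auto
  also have "\<dots> = s * L" by simp
  finally have "real (card {k\<in>{1..n}. primepow k \<and> \<not> prime k}) \<le> real s * real L" by (metis of_nat_le_iff of_nat_mult)
  also have "real s \<le> sqrt (real n)" unfolding s_def by simp
  hence "real s * real L \<le> sqrt (real n) * real L" by (intro mult_right_mono) auto
  also have "real L \<le> log 2 (real n)" unfolding L_def using n by simp
  hence "sqrt (real n) * real L \<le> sqrt (real n) * log 2 (real n)" by (intro mult_left_mono) auto
  finally show ?thesis .
qed

lemma psi_theta: assumes n: "n \<ge> 1"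
  shows "psiC n - thetaC n \<le> sqrt (real n) * log 2 (real n) * ln (real n)"
proof -
  have "psiC n - thetaC n = (\<Sum>k\<in>{k\<in>{1..n}. primepow k \<and> \<not> prime k}. mangoldt k)"
    by (rule theta_le_psi_diff)
  also have "\<dots> \<le> (\<Sum>k\<in>{k\<in>{1..n}. primepow k \<and> \<not> prime k}. ln (real n))"
  proof (rule sum_mono)
    fix k assume k: "k \<in> {k\<in>{1..n}. primepow k \<and> \<not> prime k}"
    have "mangoldt k \<le> ln (real k)" using k by (intro mangoldt_le) auto
    also have "\<dots> \<le> ln (real n)"
    proof -
      have "1 \<le> k" "k \<le> n" using k by auto
      thus ?thesis by simp
    qed
    finally show "mangoldt k \<le> ln (real n)" .
  qed
  also have "\<dots> = real (card {k\<in>{1..n}. primepow k \<and> \<not> prime k}) * ln (real n)" by simp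
  also have "\<dots> \<le> sqrt (real n) * log 2 (real n) * ln (real n)"
    using n by (intro mult_right_mono card_nonprime_pp) auto
  finally show ?thesis .
qed

lemma theta_nonneg: "thetaC n \<ge> 0"
  unfolding thetaC_def by (intro sum_nonneg) auto

lemma theta_le_psi: "thetaC n \<le> psiC n"
proof -
  have "psiC n - thetaC n = (\<Sum>k\<in>{k\<in>{1..n}. primepow k \<and> \<not> prime k}. mangoldt k)"
    by (rule theta_le_psi_diff)
  also have "\<dots> \<ge> 0" by (intro sum_nonneg) (auto simp: mangoldt_nonneg)
  finally show ?thesis by simp
qed

lemma theta_lower: "\<exists>n0. \<forall>n\<ge>n0. thetaC n \<ge> (91/100) * real n"
proof -
  have ev: "eventually (\<lambda>n::nat. (921/1000) * (real n - 30) - 3 * ln (real n) - 1 - sqrt (real n) * log 2 (real n) * ln (real n) \<ge> (91/100) * real n) at_top"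
    by real_asymp
  then obtain n1 where n1: "\<And>n. n \<ge> n1 \<Longrightarrow> (921/1000) * (real n - 30) - 3 * ln (real n) - 1 - sqrt (real n) * log 2 (real n) * ln (real n) \<ge> (91/100) * real n"
    by (auto simp: eventually_at_top_linorder)
  have "thetaC n \<ge> (91/100) * real n" if n: "n \<ge> max n1 30" for n
  proof -
    have "psiC n \<ge> cA * (real n - 30) - 3 * ln (real n) - 1" using psi_lower n by simp
    moreover have "cA * (real n - 30) \<ge> (921/1000) * (real n - 30)" using cA_bounds n by (intro mult_right_mono) auto
    moreover have "psiC n - thetaC n \<le> sqrt (real n) * log 2 (real n) * ln (real n)" using psi_theta n by simp
    moreover have "(921/1000) * (real n - 30) - 3 * ln (real n) - 1 - sqrt (real n) * log 2 (real n) * ln (real n) \<ge> (91/100) * real n" using n1 n by simp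
    ultimately show ?thesis by linarith
  qed
  thus ?thesis by blast
qed

lemma theta_upper: "\<exists>n0. \<forall>n\<ge>n0. thetaC n \<le> (112/100) * real n"
proof -
  obtain C where C: "\<And>n. psiC n \<le> (111/100) * real n + C" using psi_upper by blast
  have ev: "eventually (\<lambda>n::nat. (111/100) * real n + C \<le> (112/100) * real n) at_top"
    by real_asymp
  then obtain n1 where n1: "\<And>n. n \<ge> n1 \<Longrightarrow> (111/100) * real n + C \<le> (112/100) * real n"
    by (auto simp: eventually_at_top_linorder)
  show ?thesis using C n1 theta_le_psi by (meson order_trans)
qed


definition Hs :: "nat \<Rightarrow> nat \<Rightarrow> real" where
  "Hs a X = (\<Sum>n\<in>{Suc a..X}. if prime n then ln (real n) / (real n)^2 else 0)"

lemma theta_Suc: "thetaC (Suc n) = thetaC n + (if prime (Suc n) then ln (real (Suc n)) else 0)"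
  unfolding thetaC_def by simp

lemma abel_step:
  fixes X a :: nat and t :: real
  assumes a: "a \<ge> 1" "a \<le> X" and t: "t \<ge> (91/100) * real X"
  shows "t * (1/(real X)^2 - 1/(real X + 1)^2) \<ge> (91/100) * (2 - 1/real a) * (1/real X - 1/(real X + 1))"
proof -
  define x where "x = real X"
  have x1: "x \<ge> 1" using a unfolding x_def by simp
  have ax: "1/real a \<ge> 1/(x+1)" using a unfolding x_def by (simp add: frac_le)
  have xp: "x > 0" "x + 1 > 0" "x \<noteq> 0" "x + 1 \<noteq> 0" using x1 by auto
  have d: "1/x^2 - 1/(x+1)^2 = (2*x+1)/(x^2*(x+1)^2)"
  proof -
    have "1/x^2 - 1/(x+1)^2 = (1*(x+1)^2 - 1*x^2)/(x^2*(x+1)^2)" using xp by (intro diff_frac_eq) auto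
    also have "1*(x+1)^2 - 1*x^2 = 2*x+1" by (simp add: power2_eq_square algebra_simps)
    finally show ?thesis .
  qed
  have dpos: "1/x^2 - 1/(x+1)^2 \<ge> 0" using x1 by (simp add: d)
  have h1: "t * (1/x^2 - 1/(x+1)^2) \<ge> (91/100) * x * (1/x^2 - 1/(x+1)^2)"
    using t dpos unfolding x_def by (intro mult_right_mono) auto
  have h2: "x * (1/x^2 - 1/(x+1)^2) = (2 - 1/(x+1)) * (1/x - 1/(x+1))"
  proof -
    have e1: "2 - 1/(x+1) = (2*x+1)/(x+1)" using xp by (simp add: field_simps)
    have e2: "1/x - 1/(x+1) = 1/(x*(x+1))" using xp by (simp add: field_simps)
    have "x * ((2*x+1)/(x^2*(x+1)^2)) = (2*x+1)/(x*(x+1)^2)" using xp by (simp add: power2_eq_square)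
    also have "\<dots> = ((2*x+1)/(x+1)) * (1/(x*(x+1)))" by (simp add: power2_eq_square mult.assoc)
    finally show ?thesis unfolding d e1 e2 .
  qed
  have h3: "(2 - 1/(x+1)) * (1/x - 1/(x+1)) \<ge> (2 - 1/real a) * (1/x - 1/(x+1))"
    using ax x1 by (intro mult_right_mono) (auto simp: field_simps)
  have "(91/100) * x * (1/x^2 - 1/(x+1)^2) = (91/100) * ((2 - 1/(x+1)) * (1/x - 1/(x+1)))"
    using h2 by (simp add: mult.assoc)
  also have "\<dots> \<ge> (91/100) * ((2 - 1/real a) * (1/x - 1/(x+1)))"
    using h3 by (intro mult_left_mono) auto
  finally have "t * (1/x^2 - 1/(x+1)^2) \<ge> (91/100) * ((2 - 1/real a) * (1/x - 1/(x+1)))"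
    using h1 by linarith
  thus ?thesis unfolding x_def by (simp only: mult.assoc)
qed

lemma abel:
  assumes a: "a \<ge> 1" and th: "\<And>n. n \<ge> a \<Longrightarrow> thetaC n \<ge> (91/100) * real n" and X: "X \<ge> a"
  shows "Hs a X \<ge> thetaC X / (real X)^2 - thetaC a / (real a)^2 + (91/100) * (2 - 1/real a) * (1/real a - 1/real X)"
  using X
proof (induction X rule: dec_induct)
  case base
  then show ?case by (simp add: Hs_def)
next
  case (step X)
  have HS: "Hs a (Suc X) = Hs a X + (if prime (Suc X) then ln (real (Suc X)) / (real (Suc X))^2 else 0)"
    unfolding Hs_def using step by simp
  have TS: "thetaC (Suc X) = thetaC X + (if prime (Suc X) then ln (real (Suc X)) else 0)" by (rule theta_Suc)
  have st: "thetaC X * (1/(real X)^2 - 1/(real X + 1)^2) \<ge> (91/100) * (2 - 1/real a) * (1/real X - 1/(real X + 1))"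
    using step a th[of X] by (intro abel_step) auto
  have e: "(if prime (Suc X) then ln (real (Suc X)) / (real (Suc X))^2 else 0) = (thetaC (Suc X) - thetaC X) / (real X + 1)^2"
    using TS by (simp add: add.commute)
  have "Hs a (Suc X) \<ge> thetaC X / (real X)^2 - thetaC a / (real a)^2 + (91/100) * (2 - 1/real a) * (1/real a - 1/real X)
        + (thetaC (Suc X) - thetaC X) / (real X + 1)^2"
    using HS e step.IH by simp
  moreover have "thetaC X / (real X)^2 + (thetaC (Suc X) - thetaC X) / (real X + 1)^2 =
     thetaC (Suc X) / (real (Suc X))^2 + thetaC X * (1/(real X)^2 - 1/(real X + 1)^2)"
    by (simp add: field_simps add.commute)
  moreover have "(91/100) * (2 - 1/real a) * (1/real a - 1/real X) + (91/100) * (2 - 1/real a) * (1/real X - 1/(real X + 1))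
     = (91/100) * (2 - 1/real a) * (1/real a - 1/real (Suc X))"
  proof -
    have gen: "\<And>c p q r::real. c*(p-q) + c*(q-r) = c*(p-r)" by algebra
    show ?thesis using gen[of "(91/100) * (2 - 1/real a)" "1/real a" "1/real X" "1/(real X + 1)"]
      by (simp only: of_nat_Suc add.commute)
  qed
  ultimately show ?case using st by linarith
qed


lemma prime_sum_lower:
  "\<exists>a0. \<forall>a\<ge>a0. (\<Sum>n\<in>{n. prime n \<and> a < n \<and> n \<le> 1000*a}. 1/(real n)^2) \<ge> (65/100)/(real a * ln (real a))"
proof -
  obtain n0 where n0: "\<And>n. n \<ge> n0 \<Longrightarrow> thetaC n \<ge> (91/100) * real n" using theta_lower by blast
  obtain n1 where n1: "\<And>n. n \<ge> n1 \<Longrightarrow> thetaC n \<le> (112/100) * real n" using theta_upper by blast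
  have ev: "eventually (\<lambda>a::nat. ((91/100)*(2-1/real a)*(999/1000) - 112/100)/(real a * ln (1000 * real a)) \<ge> (65/100)/(real a * ln (real a))) at_top"
    by real_asymp
  then obtain a1 where a1: "\<And>a. a \<ge> a1 \<Longrightarrow> ((91/100)*(2-1/real a)*(999/1000) - 112/100)/(real a * ln (1000 * real a)) \<ge> (65/100)/(real a * ln (real a))"
    by (auto simp: eventually_at_top_linorder)
  define a0 where "a0 = max (max n0 n1) (max a1 2)"
  have "(\<Sum>n\<in>{n. prime n \<and> a < n \<and> n \<le> 1000*a}. 1/(real n)^2) \<ge> (65/100)/(real a * ln (real a))" if a: "a \<ge> a0" for a
  proof -
    define X where "X = 1000*a"
    define P where "P = (\<Sum>n\<in>{n. prime n \<and> a < n \<and> n \<le> 1000*a}. 1/(real n)^2)"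
    have a2: "a \<ge> 2" "a \<ge> n0" "a \<ge> n1" "a \<ge> a1" using a unfolding a0_def by auto
    have Xa: "X \<ge> a" unfolding X_def by simp
    have H: "Hs a X \<ge> thetaC X / (real X)^2 - thetaC a / (real a)^2 + (91/100) * (2 - 1/real a) * (1/real a - 1/real X)"
      using a2 n0 Xa by (intro abel) auto
    have thX: "thetaC X / (real X)^2 \<ge> 0" using theta_nonneg by simp
    have tha: "thetaC a / (real a)^2 \<le> (112/100) / real a"
    proof -
      have "thetaC a / (real a)^2 \<le> ((112/100) * real a) / (real a)^2"
        using n1 a2 by (intro divide_right_mono) auto
      also have "\<dots> = (112/100) / real a" using a2 by (simp add: power2_eq_square)
      finally show ?thesis .
    qed
    have fr: "1/real a - 1/real X = (999/1000) / real a" unfolding X_def using a2 by (simp add: field_simps)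
    have "Hs a X \<ge> (91/100) * (2 - 1/real a) * ((999/1000) / real a) - (112/100) / real a"
      using H thX tha fr by simp
    also have "(91/100) * (2 - 1/real a) * ((999/1000) / real a) - (112/100) / real a
        = ((91/100)*(2-1/real a)*(999/1000) - 112/100) / real a"
      by (simp add: diff_divide_distrib)
    finally have H2: "Hs a X \<ge> ((91/100)*(2-1/real a)*(999/1000) - 112/100) / real a" .
    have setS: "{n. prime n \<and> a < n \<and> n \<le> 1000*a} = {n\<in>{Suc a..X}. prime n}" unfolding X_def by auto
    have "Hs a X = (\<Sum>n\<in>{n\<in>{Suc a..X}. prime n}. ln (real n) / (real n)^2)"
      unfolding Hs_def by (rule sum.inter_filter[symmetric]) simp
    also have "\<dots> \<le> (\<Sum>n\<in>{n\<in>{Suc a..X}. prime n}. ln (real X) * (1/(real n)^2))"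
    proof (rule sum_mono)
      fix n assume n: "n \<in> {n\<in>{Suc a..X}. prime n}"
      have "ln (real n) \<le> ln (real X)" using n by auto
      thus "ln (real n) / (real n)^2 \<le> ln (real X) * (1/(real n)^2)" by (simp add: divide_right_mono)
    qed
    also have "\<dots> = ln (real X) * P" unfolding P_def setS by (simp add: sum_distrib_left)
    finally have HP: "((91/100)*(2-1/real a)*(999/1000) - 112/100) / real a \<le> P * ln (real X)" using H2 by (simp add: mult.commute)
    have lX: "ln (real X) > 0" unfolding X_def using a2 by simp
    have "((91/100)*(2-1/real a)*(999/1000) - 112/100) / real a / ln (real X) \<le> P"
      using HP lX by (subst pos_divide_le_eq) auto
    moreover have "real X = 1000 * real a" unfolding X_def by simp
    ultimately have "((91/100)*(2-1/real a)*(999/1000) - 112/100) / (real a * ln (1000 * real a)) \<le> P"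
      by (simp add: divide_divide_eq_left)
    thus ?thesis using a1[OF a2(4)] unfolding P_def by linarith
  qed
  thus ?thesis by blast
qed


definition Ifn :: "nat \<Rightarrow> real \<Rightarrow> real" where
  "Ifn N \<phi> = integral {\<phi>..2*\<phi>} (\<lambda>x. (real N)^2 / (2 * x^2 * ln x))"

lemma cont_f: "1 < a \<Longrightarrow> continuous_on {a..b} (\<lambda>x. (real N)^2 / (2 * x^2 * ln x))"
  by (intro continuous_intros) auto

lemma int_inv_sq: fixes a b c :: real assumes "0 < a" "a \<le> b"
  shows "((\<lambda>x. c / x^2) has_integral (c/a - c/b)) {a..b}"
proof -
  have "((\<lambda>x. c / x^2) has_integral ((\<lambda>x. - c / x) b - (\<lambda>x. - c / x) a)) {a..b}"
  proof (rule fundamental_theorem_of_calculus[OF assms(2)])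
    fix x assume x: "x \<in> {a..b}"
    hence x0: "x \<noteq> 0" using assms by auto
    have "((\<lambda>x. - c / x) has_real_derivative c / x^2) (at x within {a..b})"
      using x0 by (auto intro!: derivative_eq_intros simp: power2_eq_square field_simps)
    thus "((\<lambda>x. - c / x) has_vector_derivative c / x^2) (at x within {a..b})"
      by (simp add: has_real_derivative_iff_has_vector_derivative)
  qed
  thus ?thesis by simp
qed

lemma I_upper: assumes phi: "\<phi> > 1"
  shows "Ifn N \<phi> \<le> (real N)^2 / (4 * \<phi> * ln \<phi>)"
proof -
  define c where "c = (real N)^2 / (2 * ln \<phi>)"
  have lp: "ln \<phi> > 0" using phi by simp
  have hi: "((\<lambda>x. c / x^2) has_integral (c/\<phi> - c/(2*\<phi>))) {\<phi>..2*\<phi>}"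
    using phi by (intro int_inv_sq) auto
  have "Ifn N \<phi> \<le> integral {\<phi>..2*\<phi>} (\<lambda>x. c / x^2)"
    unfolding Ifn_def
  proof (rule integral_le)
    show "(\<lambda>x. (real N)^2 / (2 * x^2 * ln x)) integrable_on {\<phi>..2*\<phi>}"
      using phi by (intro integrable_continuous_interval cont_f)
    show "(\<lambda>x. c / x^2) integrable_on {\<phi>..2*\<phi>}" using hi by blast
    fix x assume x: "x \<in> {\<phi>..2*\<phi>}"
    have lx: "ln x \<ge> ln \<phi>" using x phi by auto
    have "(real N)^2 / (2 * x^2 * ln x) = ((real N)^2 / x^2) / (2 * ln x)" by (simp add: field_simps)
    also have "\<dots> \<le> ((real N)^2 / x^2) / (2 * ln \<phi>)"
      using lx lp by (intro divide_left_mono) auto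
    also have "\<dots> = c / x^2" unfolding c_def by (simp add: field_simps)
    finally show "(real N)^2 / (2 * x^2 * ln x) \<le> c / x^2" .
  qed
  also have "\<dots> = c/\<phi> - c/(2*\<phi>)" using hi by (simp add: integral_unique)
  also have "\<dots> = (real N)^2 / (4 * \<phi> * ln \<phi>)" unfolding c_def using phi lp by (simp add: field_simps)
  finally show ?thesis .
qed

lemma I_lower: assumes phi: "\<phi> > 1"
  shows "(real N)^2 / (4 * \<phi> * ln (2*\<phi>)) \<le> Ifn N \<phi>"
proof -
  define c where "c = (real N)^2 / (2 * ln (2*\<phi>))"
  have lp: "ln (2*\<phi>) > 0" using phi by simp
  have hi: "((\<lambda>x. c / x^2) has_integral (c/\<phi> - c/(2*\<phi>))) {\<phi>..2*\<phi>}"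
    using phi by (intro int_inv_sq) auto
  have "integral {\<phi>..2*\<phi>} (\<lambda>x. c / x^2) \<le> Ifn N \<phi>"
    unfolding Ifn_def
  proof (rule integral_le)
    show "(\<lambda>x. (real N)^2 / (2 * x^2 * ln x)) integrable_on {\<phi>..2*\<phi>}"
      using phi by (intro integrable_continuous_interval cont_f)
    show "(\<lambda>x. c / x^2) integrable_on {\<phi>..2*\<phi>}" using hi by blast
    fix x assume x: "x \<in> {\<phi>..2*\<phi>}"
    have lx: "ln x \<le> ln (2*\<phi>)" "ln x > 0" using x phi by auto
    have "c / x^2 = ((real N)^2 / x^2) / (2 * ln (2*\<phi>))" unfolding c_def by (simp add: field_simps)
    also have "\<dots> \<le> ((real N)^2 / x^2) / (2 * ln x)"
      using lx by (intro divide_left_mono) auto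
    also have "\<dots> = (real N)^2 / (2 * x^2 * ln x)" by (simp add: field_simps)
    finally show "c / x^2 \<le> (real N)^2 / (2 * x^2 * ln x)" .
  qed
  moreover have "integral {\<phi>..2*\<phi>} (\<lambda>x. c / x^2) = c/\<phi> - c/(2*\<phi>)" using hi by (simp add: integral_unique)
  moreover have "c/\<phi> - c/(2*\<phi>) = (real N)^2 / (4 * \<phi> * ln (2*\<phi>))" unfolding c_def using phi lp by (simp add: field_simps)
  ultimately show ?thesis by simp
qed

definition Gfn :: "nat \<Rightarrow> real \<Rightarrow> real" where
  "Gfn N y = integral {2..y} (\<lambda>x. (real N)^2 / (2 * x^2 * ln x))"

lemma G_deriv: assumes "x > 2"
  shows "(Gfn N has_real_derivative ((real N)^2 / (2 * x^2 * ln x))) (at x)"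
proof -
  have "((\<lambda>y. integral {2..y} (\<lambda>x. (real N)^2 / (2 * x^2 * ln x))) has_real_derivative ((real N)^2 / (2 * x^2 * ln x))) (at x within {2..x+1})"
    using assms by (intro integral_has_real_derivative cont_f) auto
  moreover have "at x within {2..x+1} = at x" using assms by (intro at_within_Icc_at) auto
  ultimately show ?thesis unfolding Gfn_def by simp
qed

lemma I_eq_G: assumes "\<phi> \<ge> 2" shows "Ifn N \<phi> = Gfn N (2*\<phi>) - Gfn N \<phi>"
proof -
  have "integral {2..\<phi>} (\<lambda>x. (real N)^2 / (2 * x^2 * ln x)) + integral {\<phi>..2*\<phi>} (\<lambda>x. (real N)^2 / (2 * x^2 * ln x))
        = integral {2..2*\<phi>} (\<lambda>x. (real N)^2 / (2 * x^2 * ln x))"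
    using assms by (intro Henstock_Kurzweil_Integration.integral_combine) (auto intro!: integrable_continuous_interval cont_f)
  thus ?thesis unfolding Ifn_def Gfn_def by simp
qed

lemma I_deriv: assumes "\<phi> > 2"
  shows "(Ifn N has_real_derivative (2 * ((real N)^2 / (2 * (2*\<phi>)^2 * ln (2*\<phi>))) - (real N)^2 / (2 * \<phi>^2 * ln \<phi>))) (at \<phi>)"
proof -
  have "((\<lambda>y. Gfn N (2*y) - Gfn N y) has_real_derivative
        ((real N)^2 / (2 * (2*\<phi>)^2 * ln (2*\<phi>)) * 2 - (real N)^2 / (2 * \<phi>^2 * ln \<phi>))) (at \<phi>)"
  proof (intro DERIV_diff)
    have d1: "(Gfn N has_real_derivative ((real N)^2 / (2 * (2*\<phi>)^2 * ln (2*\<phi>)))) (at (2*\<phi>))"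
      using assms by (intro G_deriv) auto
    have d2: "((\<lambda>y. 2*y) has_real_derivative 2) (at \<phi>)" by (auto intro!: derivative_eq_intros)
    show "((\<lambda>y. Gfn N (2*y)) has_real_derivative ((real N)^2 / (2 * (2*\<phi>)^2 * ln (2*\<phi>)) * 2)) (at \<phi>)"
      using DERIV_chain2[OF d1 d2] by simp
    show "(Gfn N has_real_derivative ((real N)^2 / (2 * \<phi>^2 * ln \<phi>))) (at \<phi>)"
      using assms by (intro G_deriv)
  qed
  hence "(Ifn N has_real_derivative
        ((real N)^2 / (2 * (2*\<phi>)^2 * ln (2*\<phi>)) * 2 - (real N)^2 / (2 * \<phi>^2 * ln \<phi>))) (at \<phi>)"
    by (rule has_field_derivative_transform_within_open[where S="{2<..}"]) (use assms I_eq_G in auto)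
  thus ?thesis by (simp add: mult.commute)
qed


lemma I_deriv_neg: assumes "\<phi> > 2" "N \<ge> 1"
  shows "2 * ((real N)^2 / (2 * (2*\<phi>)^2 * ln (2*\<phi>))) - (real N)^2 / (2 * \<phi>^2 * ln \<phi>) < 0"
proof -
  have l1: "ln \<phi> > 0" "ln (2*\<phi>) > ln \<phi>" using assms by auto
  have "2 * ((real N)^2 / (2 * (2*\<phi>)^2 * ln (2*\<phi>))) = (real N)^2 / (4 * \<phi>^2 * ln (2*\<phi>))"
    by (simp add: power2_eq_square field_simps)
  also have "\<dots> < (real N)^2 / (2 * \<phi>^2 * ln \<phi>)"
  proof (rule divide_strict_left_mono)
    have "2 * \<phi>^2 * ln \<phi> < 2 * \<phi>^2 * ln (2*\<phi>)" using l1 assms by (intro mult_strict_left_mono) auto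
    also have "\<dots> \<le> 4 * \<phi>^2 * ln (2*\<phi>)" using l1 by (intro mult_right_mono) auto
    finally show "2 * \<phi>^2 * ln \<phi> < 4 * \<phi>^2 * ln (2*\<phi>)" .
    show "0 < (real N)^2" using assms by simp
    show "0 < 4 * \<phi>^2 * ln (2*\<phi>) * (2 * \<phi>^2 * ln \<phi>)" using l1 assms by (intro mult_pos_pos) auto
  qed
  finally show ?thesis by simp
qed

lemma I_strict_dec: assumes "2 < \<phi>" "\<phi> < \<phi>'" "N \<ge> 1"
  shows "Ifn N \<phi>' < Ifn N \<phi>"
proof (rule DERIV_neg_imp_decreasing[OF assms(2)])
  fix x assume "\<phi> \<le> x" "x \<le> \<phi>'"
  hence x: "x > 2" using assms by simp
  show "\<exists>y. (Ifn N has_real_derivative y) (at x) \<and> y < 0"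
    using I_deriv[OF x] I_deriv_neg[OF x assms(3)] by blast
qed

lemma I_cont: assumes "2 < a" shows "continuous_on {a..b} (Ifn N)"
proof (rule continuous_at_imp_continuous_on, intro ballI)
  fix x assume "x \<in> {a..b}"
  hence x: "x > 2" using assms by simp
  show "isCont (Ifn N) x" using I_deriv[OF x] by (rule DERIV_isCont)
qed

lemma phiN_char:
  assumes d: "\<delta> > 0" and N: "N \<ge> 1"
    and c1: "\<delta> < (real N)^2 / (12 * ln 6)"
    and c2: "1 / (4 * ln ((real N)^2 + 3)) \<le> \<delta>"
  shows "phiN \<delta> N > 3 \<and> Ifn N (phiN \<delta> N) = \<delta>"
proof -
  define b where "b = (real N)^2 + 3"
  have b3: "b \<ge> 3" unfolding b_def by simp
  have small: "Ifn N \<phi> > \<delta>" if "1 < \<phi>" "\<phi> \<le> 3" for \<phi>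
  proof -
    have "4 * \<phi> * ln (2*\<phi>) \<le> 4 * 3 * ln (2*3)"
      using that by (intro mult_mono) auto
    moreover have "4 * \<phi> * ln (2*\<phi>) > 0" using that by simp
    ultimately have "(real N)^2 / (12 * ln 6) \<le> (real N)^2 / (4 * \<phi> * ln (2*\<phi>))"
      by (intro divide_left_mono) auto
    thus ?thesis using I_lower[of \<phi> N] that c1 by linarith
  qed
  have Ib: "Ifn N b \<le> \<delta>"
  proof -
    have "Ifn N b \<le> (real N)^2 / (4 * b * ln b)" using b3 by (intro I_upper) auto
    also have "\<dots> \<le> b / (4 * b * ln b)" using b3 unfolding b_def by (intro divide_right_mono) auto
    also have "\<dots> = 1 / (4 * ln b)" using b3 by simp
    finally show ?thesis using c2 unfolding b_def by linarith
  qed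
  have I3: "\<delta> \<le> Ifn N 3" using small[of 3] by simp
  obtain \<phi>0 where p0: "\<phi>0 \<ge> 3" "\<phi>0 \<le> b" "Ifn N \<phi>0 = \<delta>"
    using IVT2'[of "Ifn N" b \<delta> 3] Ib I3 b3 I_cont[of 3 b N] by auto
  have p03: "\<phi>0 > 3" using p0 small[of 3] by (cases "\<phi>0 = 3") auto
  have uniq: "\<phi> = \<phi>0" if "\<phi> > 1" "Ifn N \<phi> = \<delta>" for \<phi>
  proof -
    have "\<phi> > 3" using small[of \<phi>] that by (cases "\<phi> \<le> 3") auto
    show ?thesis
    proof (rule ccontr)
      assume ne: "\<phi> \<noteq> \<phi>0"
      show False
      proof (cases "\<phi> < \<phi>0")
        case True thus False using I_strict_dec[of \<phi> \<phi>0 N] \<open>\<phi> > 3\<close> N that p0 by auto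
      next
        case False hence "\<phi>0 < \<phi>" using ne by simp
        thus False using I_strict_dec[of \<phi>0 \<phi> N] p03 N that p0 by auto
      qed
    qed
  qed
  have "phiN \<delta> N = \<phi>0" unfolding phiN_def
  proof (rule the_equality)
    show "1 < \<phi>0 \<and> integral {\<phi>0..2 * \<phi>0} (\<lambda>x. (real N)\<^sup>2 / (2 * x\<^sup>2 * ln x)) = \<delta>"
      using p0 p03 unfolding Ifn_def by simp
    fix \<phi> assume "1 < \<phi> \<and> integral {\<phi>..2 * \<phi>} (\<lambda>x. (real N)\<^sup>2 / (2 * x\<^sup>2 * ln x)) = \<delta>"
    thus "\<phi> = \<phi>0" using uniq unfolding Ifn_def by auto
  qed
  thus ?thesis using p0 p03 by simp
qed


definition Pairs :: "nat \<Rightarrow> (nat \<times> nat) set" where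
  "Pairs N = {(k,j). 1 \<le> k \<and> k < j \<and> j \<le> N}"

lemma Pairs_finite: "finite (Pairs N)"
proof -
  have "Pairs N \<subseteq> {1..N} \<times> {1..N}" unfolding Pairs_def by auto
  thus ?thesis by (rule finite_subset) auto
qed

lemma Pairs_card: "real (card (Pairs N)) = real N * (real N - 1) / 2"
proof (induction N)
  case 0
  have "Pairs 0 = {}" unfolding Pairs_def by auto
  thus ?case by simp
next
  case (Suc N)
  have eq: "Pairs (Suc N) = Pairs N \<union> (\<lambda>k. (k, Suc N)) ` {1..N}"
    unfolding Pairs_def by (auto simp: le_Suc_eq)
  have disj: "Pairs N \<inter> (\<lambda>k. (k, Suc N)) ` {1..N} = {}" unfolding Pairs_def by auto
  have "card (Pairs (Suc N)) = card (Pairs N) + card ((\<lambda>k. (k, Suc N)) ` {1..N})"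
    unfolding eq using disj Pairs_finite by (intro card_Un_disjoint) auto
  also have "card ((\<lambda>k. (k, Suc N)) ` {1..N}) = N" by (subst card_image) (auto simp: inj_on_def)
  finally have "real (card (Pairs (Suc N))) = real (card (Pairs N)) + real N" by simp
  thus ?case using Suc by (simp add: field_simps)
qed

lemma prod_two_values:
  assumes kj: "(k,j) \<in> Pairs N"
  shows "(\<Prod>l\<in>{1..N}. if l = k \<or> l = j then (a::real) else b) = a^2 * b^(N-2)"
proof -
  have c1: "{1..N} \<inter> {l. l = k \<or> l = j} = {k,j}" using kj unfolding Pairs_def by auto
  have c2: "card ({1..N} \<inter> - {l. l = k \<or> l = j}) = N - 2"
  proof -
    have "{1..N} \<inter> - {l. l = k \<or> l = j} = {1..N} - {k,j}" by auto
    moreover have "card ({1..N} - {k,j}) = card {1..N} - card {k,j}"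
      using kj unfolding Pairs_def by (intro card_Diff_subset) auto
    moreover have "card {k,j} = 2" using kj unfolding Pairs_def by auto
    ultimately show ?thesis by simp
  qed
  have c3: "card {k,j} = 2" using kj unfolding Pairs_def by auto
  have "(\<Prod>l\<in>{1..N}. if l = k \<or> l = j then (a::real) else b) =
      prod (\<lambda>_. a) ({1..N} \<inter> {l. l = k \<or> l = j}) * prod (\<lambda>_. b) ({1..N} \<inter> - {l. l = k \<or> l = j})"
    by (rule prod.If_cases) simp
  also have "\<dots> = a^2 * b^(N-2)" by (simp only: prod_constant c1 c2 c3)
  finally show ?thesis .
qed

context
  fixes M :: "'a measure" and Z :: "nat \<Rightarrow> nat \<Rightarrow> 'a \<Rightarrow> real" and N :: nat
  assumes P: "prob_space M"
    and rv: "\<And>i k. 1 \<le> i \<Longrightarrow> 1 \<le> k \<Longrightarrow> k \<le> N \<Longrightarrow> Z i k \<in> borel_measurable M"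
    and indep: "prob_space.indep_vars M (\<lambda>_. borel) (\<lambda>(i, k). Z i k) {(i, k). 1 \<le> i \<and> 1 \<le> k \<and> k \<le> N}"
    and bern1: "\<And>i k. 1 \<le> i \<Longrightarrow> 1 \<le> k \<Longrightarrow> k \<le> N \<Longrightarrow>
       measure M {\<omega> \<in> space M. Z i k \<omega> = 1} = 1 / real (pr i)"
    and bern0: "\<And>i k. 1 \<le> i \<Longrightarrow> 1 \<le> k \<Longrightarrow> k \<le> N \<Longrightarrow>
       measure M {\<omega> \<in> space M. Z i k \<omega> = 0} = 1 - 1 / real (pr i)"
begin

interpretation prob_space M by (rule P)

lemma ev_eq: "1 \<le> i \<Longrightarrow> 1 \<le> k \<Longrightarrow> k \<le> N \<Longrightarrow> {\<omega> \<in> space M. Z i k \<omega> = c} \<in> events"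
proof -
  assume a: "1 \<le> i" "1 \<le> k" "k \<le> N"
  have "Z i k -` {c} \<inter> space M \<in> events" using rv[OF a] by (rule measurable_sets) simp
  moreover have "Z i k -` {c} \<inter> space M = {\<omega> \<in> space M. Z i k \<omega> = c}" by auto
  ultimately show ?thesis by simp
qed

definition Ev :: "nat \<Rightarrow> nat \<times> nat \<Rightarrow> 'a set" where
  "Ev i kj = {\<omega> \<in> space M. \<forall>l\<in>{1..N}. Z i l \<omega> = (if l = fst kj \<or> l = snd kj then 1 else 0)}"

lemma Ev_prob:
  assumes i: "i \<ge> 1" and kj: "kj \<in> Pairs N"
  shows "prob (Ev i kj) = (1 / real (pr i))^2 * (1 - 1 / real (pr i))^(N-2)"
proof -
  obtain k j where kj': "kj = (k,j)" by (cases kj)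
  define A where "A = (\<lambda>x::nat\<times>nat. {if snd x = k \<or> snd x = j then 1 else (0::real)})"
  define J where "J = Pair i ` {1..N}"
  have N1: "N \<ge> 1" using kj kj' unfolding Pairs_def by auto
  have "Ev i kj = (\<Inter>x\<in>J. (\<lambda>(i, k). Z i k) x -` A x \<inter> space M)"
    unfolding Ev_def J_def A_def kj' using N1 by auto
  moreover have "J \<subseteq> {(i, k). 1 \<le> i \<and> 1 \<le> k \<and> k \<le> N}" unfolding J_def using i by auto
  moreover have "J \<noteq> {}" "finite J" unfolding J_def using N1 by auto
  ultimately have "prob (Ev i kj) = (\<Prod>x\<in>J. prob ((\<lambda>(i, k). Z i k) x -` A x \<inter> space M))"
    using indep_varsD[OF indep, of J A] unfolding A_def by auto
  also have "\<dots> = (\<Prod>l\<in>{1..N}. prob ((\<lambda>(i, k). Z i k) (i,l) -` A (i,l) \<inter> space M))"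
    unfolding J_def by (subst prod.reindex) (auto simp: inj_on_def)
  also have "\<dots> = (\<Prod>l\<in>{1..N}. if l = k \<or> l = j then 1 / real (pr i) else 1 - 1 / real (pr i))"
  proof (intro prod.cong refl)
    fix l assume l: "l \<in> {1..N}"
    have e: "(\<lambda>(i, k). Z i k) (i,l) -` A (i,l) \<inter> space M = {\<omega> \<in> space M. Z i l \<omega> = (if l = k \<or> l = j then 1 else 0)}"
      unfolding A_def by auto
    show "prob ((\<lambda>(i, k). Z i k) (i,l) -` A (i,l) \<inter> space M) = (if l = k \<or> l = j then 1 / real (pr i) else 1 - 1 / real (pr i))"
      unfolding e using bern1[of i l] bern0[of i l] l i by auto
  qed
  also have "\<dots> = (1 / real (pr i))^2 * (1 - 1 / real (pr i))^(N-2)"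
    using kj kj' by (intro prod_two_values) auto
  finally show ?thesis .
qed


lemma Ev_events: assumes i: "i \<ge> 1" and N1: "N \<ge> 1" shows "Ev i kj \<in> events"
proof -
  have "Ev i kj = (\<Inter>l\<in>{1..N}. {\<omega> \<in> space M. Z i l \<omega> = (if l = fst kj \<or> l = snd kj then 1 else 0)})"
    unfolding Ev_def using N1 by auto
  also have "\<dots> \<in> events" using i N1 by (intro sets.finite_INT ev_eq) auto
  finally show ?thesis .
qed

definition Fc :: "nat \<Rightarrow> 'a set" where
  "Fc i = (\<Union>kj\<in>Pairs N. {\<omega> \<in> space M. Z i (fst kj) \<omega> = 1} \<inter> {\<omega> \<in> space M. Z i (snd kj) \<omega> = 1})"

lemma Fc_events: assumes i: "i \<ge> 1" shows "Fc i \<in> events"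
  unfolding Fc_def using i Pairs_finite
  by (intro sets.finite_UN sets.Int ev_eq) (auto simp: Pairs_def)

lemma Ev_sub: assumes "kj \<in> Pairs N" shows "Ev i kj \<subseteq> Fc i"
proof
  fix \<omega> assume w: "\<omega> \<in> Ev i kj"
  have r: "fst kj \<in> {1..N}" "snd kj \<in> {1..N}" using assms unfolding Pairs_def by auto
  have "Z i (fst kj) \<omega> = 1" "Z i (snd kj) \<omega> = 1" "\<omega> \<in> space M"
    using w r unfolding Ev_def by auto
  thus "\<omega> \<in> Fc i" unfolding Fc_def using assms by auto
qed

lemma Ev_disj: "disjoint_family_on (Ev i) (Pairs N)"
  unfolding disjoint_family_on_def
proof (intro ballI impI)
  fix kj kj' assume a: "kj \<in> Pairs N" "kj' \<in> Pairs N" "kj \<noteq> kj'"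
  obtain k j k' j' where e: "kj = (k,j)" "kj' = (k',j')" by (cases kj, cases kj')
  have r: "1 \<le> k" "k < j" "j \<le> N" "1 \<le> k'" "k' < j'" "j' \<le> N" using a e unfolding Pairs_def by auto
  show "Ev i kj \<inter> Ev i kj' = {}"
  proof (rule ccontr)
    assume "Ev i kj \<inter> Ev i kj' \<noteq> {}"
    then obtain \<omega> where w: "\<omega> \<in> Ev i kj" "\<omega> \<in> Ev i kj'" by auto
    have w1: "\<forall>l\<in>{1..N}. Z i l \<omega> = (if l = k \<or> l = j then 1 else 0)" using w(1) e unfolding Ev_def by auto
    have w2: "\<forall>l\<in>{1..N}. Z i l \<omega> = (if l = k' \<or> l = j' then 1 else 0)" using w(2) e unfolding Ev_def by auto
    have "k = k' \<or> k = j'" using w1[rule_format, of k] w2[rule_format, of k] r by (auto split: if_splits)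
    moreover have "j = k' \<or> j = j'" using w1[rule_format, of j] w2[rule_format, of j] r by (auto split: if_splits)
    moreover have "k' = k \<or> k' = j" using w1[rule_format, of k'] w2[rule_format, of k'] r by (auto split: if_splits)
    moreover have "j' = k \<or> j' = j" using w1[rule_format, of j'] w2[rule_format, of j'] r by (auto split: if_splits)
    ultimately have "k = k' \<and> j = j'" using r by auto
    thus False using a e by auto
  qed
qed

definition sval :: "nat \<Rightarrow> real" where
  "sval i = real (card (Pairs N)) * ((1 / real (pr i))^2 * (1 - 1 / real (pr i))^(N-2))"

lemma Fc_prob: assumes i: "i \<ge> 1" and N1: "N \<ge> 1" shows "prob (Fc i) \<ge> sval i"
proof -
  have "prob (\<Union>kj\<in>Pairs N. Ev i kj) = (\<Sum>kj\<in>Pairs N. prob (Ev i kj))"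
    using Pairs_finite Ev_disj Ev_events[OF i N1] by (intro finite_measure_finite_Union) auto
  also have "\<dots> = (\<Sum>kj\<in>Pairs N. (1 / real (pr i))^2 * (1 - 1 / real (pr i))^(N-2))"
    using Ev_prob i by (intro sum.cong) auto
  also have "\<dots> = sval i" unfolding sval_def by simp
  finally have e: "prob (\<Union>kj\<in>Pairs N. Ev i kj) = sval i" .
  have "prob (\<Union>kj\<in>Pairs N. Ev i kj) \<le> prob (Fc i)"
    using Ev_sub Fc_events[OF i] by (intro finite_measure_mono) auto
  thus ?thesis using e by simp
qed

definition Gc :: "nat \<Rightarrow> 'a set" where
  "Gc i = {\<omega> \<in> space M. \<not> (\<exists>kj\<in>Pairs N. Z i (fst kj) \<omega> = 1 \<and> Z i (snd kj) \<omega> = 1)}"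

lemma Gc_eq: "Gc i = space M - Fc i"
  unfolding Gc_def Fc_def by auto

lemma Gc_indep: assumes I: "\<And>i. i \<in> I \<Longrightarrow> i \<ge> 1" shows "indep_events Gc I"
proof -
  define K where "K = (\<lambda>i::nat. Pair i ` {1..N})"
  have iv: "indep_vars (\<lambda>j. PiM (K j) (\<lambda>_. (borel :: real measure))) (\<lambda>j \<omega>. restrict (\<lambda>x. (\<lambda>(i, k). Z i k) x \<omega>) (K j)) I"
  proof (rule indep_vars_restrict[OF indep])
    show "\<And>j. j \<in> I \<Longrightarrow> K j \<subseteq> {(i, k). 1 \<le> i \<and> 1 \<le> k \<and> k \<le> N}" unfolding K_def using I by auto
    show "disjoint_family_on K I" unfolding K_def disjoint_family_on_def by auto
  qed
  define Pp where "Pp = (\<lambda>i (g :: nat \<times> nat \<Rightarrow> real). \<not> (\<exists>kj\<in>Pairs N. g (i, fst kj) = 1 \<and> g (i, snd kj) = 1))"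
  have meas: "{g \<in> space (PiM (K i) (\<lambda>_. (borel :: real measure))). Pp i g} \<in> sets (PiM (K i) (\<lambda>_. (borel :: real measure)))" if "i \<in> I" for i
  proof -
    have c: "{g \<in> space (PiM (K i) (\<lambda>_. (borel :: real measure))). g (i, l) = 1} \<in> sets (PiM (K i) (\<lambda>_. (borel :: real measure)))" if "l \<in> {1..N}" for l
    proof -
      have "(\<lambda>g::nat\<times>nat\<Rightarrow>real. g (i, l)) \<in> measurable (PiM (K i) (\<lambda>_. (borel :: real measure))) borel"
        using that unfolding K_def by (intro measurable_component_singleton) auto
      hence "(\<lambda>g. g (i, l)) -` {1} \<inter> space (PiM (K i) (\<lambda>_. (borel :: real measure))) \<in> sets (PiM (K i) (\<lambda>_. (borel :: real measure)))"
        by (rule measurable_sets) simp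
      moreover have "(\<lambda>g. g (i, l)) -` {1} \<inter> space (PiM (K i) (\<lambda>_. (borel :: real measure))) = {g \<in> space (PiM (K i) (\<lambda>_. (borel :: real measure))). g (i, l) = 1}" by auto
      ultimately show ?thesis by simp
    qed
    have "{g \<in> space (PiM (K i) (\<lambda>_. (borel :: real measure))). Pp i g} = space (PiM (K i) (\<lambda>_. (borel :: real measure))) -
       (\<Union>kj\<in>Pairs N. {g \<in> space (PiM (K i) (\<lambda>_. (borel :: real measure))). g (i, fst kj) = 1} \<inter> {g \<in> space (PiM (K i) (\<lambda>_. (borel :: real measure))). g (i, snd kj) = 1})"
      unfolding Pp_def by auto
    also have "\<dots> \<in> sets (PiM (K i) (\<lambda>_. (borel :: real measure)))"
      using Pairs_finite by (intro sets.Diff sets.top sets.finite_UN sets.Int c) (auto simp: Pairs_def)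
    finally show ?thesis .
  qed
  have ie: "indep_events (\<lambda>i. {x \<in> space M. Pp i ((\<lambda>j \<omega>. restrict (\<lambda>x. (\<lambda>(i, k). Z i k) x \<omega>) (K j)) i x)}) I"
    by (rule indep_eventsI_indep_vars[OF iv]) (use meas in auto)
  have "{x \<in> space M. Pp i ((\<lambda>j \<omega>. restrict (\<lambda>x. (\<lambda>(i, k). Z i k) x \<omega>) (K j)) i x)} = Gc i" for i
  proof -
    have "Pp i (restrict (\<lambda>x. (\<lambda>(i, k). Z i k) x \<omega>) (K i)) = (\<not> (\<exists>kj\<in>Pairs N. Z i (fst kj) \<omega> = 1 \<and> Z i (snd kj) \<omega> = 1))" for \<omega>
    proof -
      have "\<And>kj. kj \<in> Pairs N \<Longrightarrow> (i, fst kj) \<in> K i \<and> (i, snd kj) \<in> K i" unfolding K_def Pairs_def by auto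
      thus ?thesis unfolding Pp_def by auto
    qed
    thus ?thesis unfolding Gc_def by auto
  qed
  with ie show ?thesis by simp
qed


lemma Delta_meas: "(\<lambda>\<omega>. DeltaN' N Z \<omega>) \<in> borel_measurable M"
  unfolding DeltaN'_def
proof (rule borel_measurable_SUP)
  show "countable {(k, j, i::nat). 1 \<le> k \<and> k < j \<and> j \<le> N \<and> 1 \<le> i}"
    by (rule countable_subset[OF subset_UNIV]) (rule countableI_type)
  fix x assume x: "x \<in> {(k, j, i::nat). 1 \<le> k \<and> k < j \<and> j \<le> N \<and> 1 \<le> i}"
  obtain k j i where e: "x = (k, j, i)" by (cases x) auto
  have a: "Z i j \<in> borel_measurable M" "Z i k \<in> borel_measurable M" using x e by (auto intro!: rv)
  show "(\<lambda>\<omega>. case x of (k, j, i) \<Rightarrow> ereal (Z i j \<omega> * Z i k \<omega> * ln (real (pr i)))) \<in> borel_measurable M"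
    unfolding e using a by (auto intro!: borel_measurable_ereal borel_measurable_times)
qed

lemma Delta_event: "{\<omega> \<in> space M. ereal c \<le> DeltaN' N Z \<omega>} \<in> events"
proof -
  have "(\<lambda>\<omega>. DeltaN' N Z \<omega>) -` {ereal c..} \<inter> space M \<in> events"
    by (rule measurable_sets[OF Delta_meas]) simp
  moreover have "(\<lambda>\<omega>. DeltaN' N Z \<omega>) -` {ereal c..} \<inter> space M = {\<omega> \<in> space M. ereal c \<le> DeltaN' N Z \<omega>}" by auto
  ultimately show ?thesis by simp
qed

lemma Fc_sub_Delta: assumes i: "i \<ge> 1" and thr: "thr > 0" "real (pr i) \<ge> thr"
  shows "Fc i \<subseteq> {\<omega> \<in> space M. ereal (ln thr) \<le> DeltaN' N Z \<omega>}"
proof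
  fix \<omega> assume w: "\<omega> \<in> Fc i"
  then obtain kj where kj: "kj \<in> Pairs N" "Z i (fst kj) \<omega> = 1" "Z i (snd kj) \<omega> = 1" "\<omega> \<in> space M"
    unfolding Fc_def by auto
  obtain k j where e: "kj = (k,j)" by (cases kj)
  have mem: "(k, j, i) \<in> {(k, j, i). 1 \<le> k \<and> k < j \<and> j \<le> N \<and> 1 \<le> i}" using kj(1) e i unfolding Pairs_def by auto
  have "ln thr \<le> ln (real (pr i))" using thr by simp
  also have "\<dots> = Z i j \<omega> * Z i k \<omega> * ln (real (pr i))" using kj e by simp
  finally have "ereal (ln thr) \<le> (case (k, j, i) of (k, j, i) \<Rightarrow> ereal (Z i j \<omega> * Z i k \<omega> * ln (real (pr i))))" by simp
  hence "ereal (ln thr) \<le> DeltaN' N Z \<omega>" unfolding DeltaN'_def by (rule SUP_upper2[OF mem])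
  thus "\<omega> \<in> {\<omega> \<in> space M. ereal (ln thr) \<le> DeltaN' N Z \<omega>}" using kj by simp
qed

lemma main_prob:
  assumes I: "finite I" "I \<noteq> {}" "\<And>i. i \<in> I \<Longrightarrow> i \<ge> 1"
    and thr: "thr > 0" "\<And>i. i \<in> I \<Longrightarrow> real (pr i) \<ge> thr" and N1: "N \<ge> 1"
  shows "measure M {\<omega> \<in> space M. ereal (ln thr) \<le> DeltaN' N Z \<omega>} \<ge> 1 - exp (- (\<Sum>i\<in>I. sval i))"
proof -
  let ?E = "{\<omega> \<in> space M. ereal (ln thr) \<le> DeltaN' N Z \<omega>}"
  have FU: "(\<Union>i\<in>I. Fc i) \<in> events" using I by (intro sets.finite_UN Fc_events) auto
  have "prob (\<Union>i\<in>I. Fc i) \<le> prob ?E"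
    using Fc_sub_Delta I thr by (intro finite_measure_mono Delta_event) auto
  moreover have "space M - (\<Union>i\<in>I. Fc i) = (\<Inter>i\<in>I. Gc i)" using I(2) unfolding Gc_eq by auto
  hence "prob (\<Union>i\<in>I. Fc i) = 1 - prob (\<Inter>i\<in>I. Gc i)" using prob_compl[OF FU] by simp
  moreover have "prob (\<Inter>i\<in>I. Gc i) = (\<Prod>i\<in>I. prob (Gc i))"
    using Gc_indep[of I] I unfolding indep_events_def by auto
  moreover have "(\<Prod>i\<in>I. prob (Gc i)) \<le> (\<Prod>i\<in>I. exp (- sval i))"
  proof (rule prod_mono)
    fix i assume i: "i \<in> I"
    have "prob (Gc i) = 1 - prob (Fc i)" unfolding Gc_eq using Fc_events I(3)[OF i] by (simp add: prob_compl)
    also have "\<dots> \<le> 1 - sval i" using Fc_prob I(3)[OF i] N1 by simp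
    also have "\<dots> \<le> exp (- sval i)" using exp_ge_add_one_self[of "- sval i"] by simp
    finally show "0 \<le> prob (Gc i) \<and> prob (Gc i) \<le> exp (- sval i)" by simp
  qed
  moreover have "(\<Prod>i\<in>I. exp (- sval i)) = exp (- (\<Sum>i\<in>I. sval i))"
    using exp_sum[OF I(1), of "\<lambda>i. - sval i"] by (simp add: sum_negf)
  ultimately show ?thesis by linarith
qed

end


lemma pr_prime: "prime (pr i)"
  unfolding pr_def using enumerate_in_set[OF primes_infinite] by simp

lemma pr_strict: "1 \<le> i \<Longrightarrow> i < j \<Longrightarrow> pr i < pr j"
  unfolding pr_def using strict_mono_enumerate[OF primes_infinite]
  by (simp add: strict_mono_def)

lemma pr_inj: "inj_on pr {i. 1 \<le> i}"
proof (rule inj_onI)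
  fix i j assume a: "i \<in> {i. 1 \<le> i}" "j \<in> {i. 1 \<le> i}" "pr i = pr j"
  show "i = j"
  proof (rule ccontr)
    assume "i \<noteq> j"
    hence "i < j \<or> j < i" by auto
    thus False using pr_strict[of i j] pr_strict[of j i] a by auto
  qed
qed

lemma pr_surj: "prime p \<Longrightarrow> \<exists>i\<ge>1. pr i = p"
proof -
  assume p: "prime p"
  have "p \<in> range (enumerate {p::nat. prime p})" using range_enumerate[OF primes_infinite] p by simp
  then obtain n where "p = enumerate {p::nat. prime p} n" by auto
  hence "pr (Suc n) = p" unfolding pr_def by simp
  thus ?thesis by (intro exI[of _ "Suc n"]) auto
qed

lemma xln_mono: fixes x y :: real assumes "1 \<le> x" "x \<le> y" shows "x * ln (2*x) \<le> y * ln (2*y)"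
  using assms by (intro mult_mono) auto

lemma final_ineq:
  fixes N :: nat and \<phi> L Q A S \<delta> :: real
  assumes L: "L > 0" and N: "N \<ge> 20" and phi: "\<phi> \<ge> 20 * real N"
    and Q: "Q \<ge> (65/100) / A" and A: "0 < A" "A \<le> (11/10) * L"
    and S: "S \<ge> (real N * (real N - 1) / 2) * (1 - real N / \<phi>) * Q"
    and d: "\<delta> \<le> (real N)^2 / (4 * L)"
  shows "S \<ge> \<delta>"
proof -
  have Nr: "real N \<ge> 20" using N by simp
  have phpos: "\<phi> > 0" using phi Nr by linarith
  have c1: "real N / \<phi> \<le> 1/20"
    using phi phpos Nr by (simp add: divide_le_eq)
  have c2: "real N * (real N - 1) / 2 \<ge> (19/40) * (real N)^2"
  proof -
    have "real N * 20 \<le> real N * real N" using Nr by (intro mult_left_mono) auto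
    thus ?thesis by (simp add: power2_eq_square algebra_simps)
  qed
  have C: "(real N * (real N - 1) / 2) * (1 - real N / \<phi>) \<ge> (19/40) * (real N)^2 * (19/20)"
    using c1 c2 Nr by (intro mult_mono) auto
  have QA: "(65/100) / A \<ge> (65/100) / ((11/10) * L)" using A by (intro divide_left_mono) auto
  have Qp: "Q \<ge> (65/100) / ((11/10) * L)" using Q QA by linarith
  have "S \<ge> ((19/40) * (real N)^2 * (19/20)) * ((65/100) / ((11/10) * L))"
  proof -
    have "((19/40) * (real N)^2 * (19/20)) * ((65/100) / ((11/10) * L))
        \<le> ((real N * (real N - 1) / 2) * (1 - real N / \<phi>)) * Q"
    proof (rule mult_mono[OF C Qp])
      show "0 \<le> (real N * (real N - 1) / 2) * (1 - real N / \<phi>)"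
        using C by (rule order_trans[rotated]) simp
      show "0 \<le> (65/100) / ((11/10) * L)" using L by simp
    qed
    thus ?thesis using S by linarith
  qed
  moreover have "((19/40) * (real N)^2 * (19/20)) * ((65/100) / ((11/10) * L)) \<ge> (real N)^2 / (4 * L)"
    using L by (simp add: field_simps)
  ultimately show ?thesis using d by linarith
qed


lemma bern_bound: fixes p \<phi> :: real assumes "\<phi> > 0" "p \<ge> \<phi>" "p \<ge> 1"
  shows "(1 - 1/p)^(N-2) \<ge> 1 - real N / \<phi>"
proof -
  have "1 + real (N-2) * (- 1/p) \<le> (1 + (- 1/p))^(N-2)"
    using assms by (intro Bernoulli_inequality) (simp add: field_simps)
  moreover have "real (N-2) / p \<le> real N / p" using assms by (intro divide_right_mono) auto
  moreover have "real N / p \<le> real N / \<phi>" using assms by (intro divide_left_mono) auto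
  ultimately show ?thesis by simp
qed

theorem proposition3p2:
  fixes M :: "nat \<Rightarrow> 'a measure"
    and Z :: "nat \<Rightarrow> nat \<Rightarrow> nat \<Rightarrow> 'a \<Rightarrow> real"
    and \<delta> :: real
  assumes delta_pos: "\<delta> > 0"
    and prob: "\<And>N. prob_space (M N)"
    and rv: "\<And>N i k. 1 \<le> i \<Longrightarrow> 1 \<le> k \<Longrightarrow> k \<le> N \<Longrightarrow> Z N i k \<in> borel_measurable (M N)"
    and indep: "\<And>N. prob_space.indep_vars (M N) (\<lambda>_. borel) (\<lambda>(i, k). Z N i k)
                    {(i, k). 1 \<le> i \<and> 1 \<le> k \<and> k \<le> N}"
    and bern1: "\<And>N i k. 1 \<le> i \<Longrightarrow> 1 \<le> k \<Longrightarrow> k \<le> N \<Longrightarrow>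
       measure (M N) {\<omega> \<in> space (M N). Z N i k \<omega> = 1} = 1 / real (pr i)"
    and bern0: "\<And>N i k. 1 \<le> i \<Longrightarrow> 1 \<le> k \<Longrightarrow> k \<le> N \<Longrightarrow>
       measure (M N) {\<omega> \<in> space (M N). Z N i k \<omega> = 0} = 1 - 1 / real (pr i)"
  shows "liminf (\<lambda>N. ereal (measure (M N)
            {\<omega> \<in> space (M N). DeltaN' N (Z N) \<omega> \<ge> ereal (ln (phiN \<delta> N))}))
         \<ge> ereal (1 - exp (- \<delta>))"
proof -
  obtain a0 where a0: "\<And>a. a \<ge> a0 \<Longrightarrow> (\<Sum>n\<in>{n. prime n \<and> a < n \<and> n \<le> 1000*a}. 1/(real n)^2) \<ge> (65/100)/(real a * ln (real a))"
    using prime_sum_lower by blast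
  have "eventually (\<lambda>x::real. (x+1)*ln(x+1) \<le> (11/10)*(x*ln x)) at_top" by real_asymp
  then obtain \<phi>1 where \<phi>1: "\<And>x::real. x \<ge> \<phi>1 \<Longrightarrow> (x+1)*ln(x+1) \<le> (11/10)*(x*ln x)"
    by (auto simp: eventually_at_top_linorder)
  define \<Phi> where "\<Phi> = real a0 + abs \<phi>1 + 3"
  have \<Phi>pos: "\<Phi> > 0" unfolding \<Phi>_def by simp
  have e1: "eventually (\<lambda>N::nat. \<delta> < (real N)^2 / (12*ln 6)) at_top" using delta_pos by real_asymp
  have e2: "eventually (\<lambda>N::nat. 1/(4*ln((real N)^2+3)) \<le> \<delta>) at_top" using delta_pos by real_asymp
  have e3: "eventually (\<lambda>N::nat. (20*real N + \<Phi>)*ln(2*(20*real N + \<Phi>)) < (real N)^2/(4*\<delta>)) at_top"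
    using delta_pos \<Phi>pos by real_asymp
  have e4: "eventually (\<lambda>N::nat. N \<ge> 20) at_top" by (rule eventually_ge_at_top)
  have "eventually (\<lambda>N. ereal (1 - exp (- \<delta>)) \<le> ereal (measure (M N)
            {\<omega> \<in> space (M N). DeltaN' N (Z N) \<omega> \<ge> ereal (ln (phiN \<delta> N))})) at_top"
    using e1 e2 e3 e4
  proof eventually_elim
    case (elim N)
    interpret P: prob_space "M N" by (rule prob)
    have N1: "N \<ge> 1" using elim(4) by simp
    define \<phi> where "\<phi> = phiN \<delta> N"
    have ph: "\<phi> > 3" "Ifn N \<phi> = \<delta>" using phiN_char[OF delta_pos N1 elim(1) elim(2)] unfolding \<phi>_def by auto
    have lowI: "(real N)^2/(4*\<phi>*ln(2*\<phi>)) \<le> \<delta>" using I_lower[of \<phi> N] ph by simp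
    have lpos: "4*\<phi>*ln(2*\<phi>) > 0" using ph by simp
    have "(real N)^2 \<le> \<delta> * (4*\<phi>*ln(2*\<phi>))" using lowI lpos by (simp add: pos_divide_le_eq)
    hence pl: "(real N)^2/(4*\<delta>) \<le> \<phi>*ln(2*\<phi>)" using delta_pos by (simp add: pos_divide_le_eq algebra_simps)
    have big: "\<phi> > 20*real N + \<Phi>"
    proof (rule ccontr)
      assume "\<not> \<phi> > 20*real N + \<Phi>"
      hence "\<phi>*ln(2*\<phi>) \<le> (20*real N + \<Phi>)*ln(2*(20*real N + \<Phi>))" using ph by (intro xln_mono) auto
      thus False using pl elim(3) by linarith
    qed
    have phN: "\<phi> \<ge> 20 * real N" and ph0: "\<phi> \<ge> real a0" and ph1: "\<phi> \<ge> \<phi>1"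
      using big \<Phi>pos unfolding \<Phi>_def by auto
    define a where "a = nat \<lceil>\<phi>\<rceil>"
    have ar: "real a \<ge> \<phi>" "real a < \<phi> + 1" unfolding a_def using ph by (auto intro: of_nat_ceiling) linarith
    have aa0: "a \<ge> a0" using ar ph0 by linarith
    define Pset where "Pset = {n. prime n \<and> a < n \<and> n \<le> 1000*a}"
    define Iset where "Iset = {i. 1 \<le> i \<and> a < pr i \<and> pr i \<le> 1000*a}"
    have img: "pr ` Iset = Pset"
    proof
      show "pr ` Iset \<subseteq> Pset" unfolding Iset_def Pset_def using pr_prime by auto
      show "Pset \<subseteq> pr ` Iset"
      proof
        fix p assume p: "p \<in> Pset"
        then obtain i where i: "i \<ge> 1" "pr i = p" using pr_surj unfolding Pset_def by auto
        thus "p \<in> pr ` Iset" using p unfolding Iset_def Pset_def by auto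
      qed
    qed
    have injI: "inj_on pr Iset" by (rule inj_on_subset[OF pr_inj]) (auto simp: Iset_def)
    have finP: "finite Pset" by (rule finite_subset[of _ "{..1000*a}"]) (auto simp: Pset_def)
    have finI: "finite Iset" using finite_imageD[OF _ injI] img finP by simp
    have Qb: "(\<Sum>p\<in>Pset. 1/(real p)^2) \<ge> (65/100)/(real a * ln (real a))" unfolding Pset_def by (rule a0[OF aa0])
    have apos: "real a * ln (real a) > 0" using ar ph by simp
    have Pne: "Pset \<noteq> {}"
    proof
      assume "Pset = {}"
      hence "(65/100)/(real a * ln (real a)) \<le> 0" using Qb by simp
      thus False using apos by simp
    qed
    have Ine: "Iset \<noteq> {}" using Pne img by auto
    have Iprops: "\<And>i. i \<in> Iset \<Longrightarrow> 1 \<le> i" "\<And>i. i \<in> Iset \<Longrightarrow> \<phi> \<le> real (pr i)"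
      using ar unfolding Iset_def by auto
    have mp: "measure (M N) {\<omega> \<in> space (M N). ereal (ln \<phi>) \<le> DeltaN' N (Z N) \<omega>} \<ge> 1 - exp (- (\<Sum>i\<in>Iset. sval N i))"
      using ph Iprops by (intro main_prob[where M="M N" and Z="Z N" and N=N] prob rv indep bern1 bern0 finI Ine N1) auto
    define S where "S = (\<Sum>i\<in>Iset. sval N i)"
    define Q where "Q = (\<Sum>p\<in>Pset. 1/(real p)^2)"
    have QI: "Q = (\<Sum>i\<in>Iset. 1/(real (pr i))^2)" unfolding Q_def img[symmetric] using injI by (simp add: sum.reindex)
    have Sb: "S \<ge> (real N * (real N - 1) / 2) * (1 - real N / \<phi>) * Q"
    proof -
      have "(real N * (real N - 1) / 2) * (1 - real N / \<phi>) * Q = (\<Sum>i\<in>Iset. (real N * (real N - 1) / 2) * (1 - real N / \<phi>) * (1/(real (pr i))^2))"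
        unfolding QI by (simp add: sum_distrib_left)
      also have "\<dots> \<le> S" unfolding S_def
      proof (rule sum_mono)
        fix i assume i: "i \<in> Iset"
        define p where "p = real (pr i)"
        have pp: "p \<ge> \<phi>" "p \<ge> 1" using Iprops[OF i] ph unfolding p_def by auto
        have sv: "sval N i = (real N * (real N - 1) / 2) * ((1/p)^2 * (1 - 1/p)^(N-2))"
          unfolding p_def using sval_def[where M="M N" and Z="Z N" and N=N, OF prob rv indep bern1 bern0] Pairs_card[of N] by simp
        have "(1 - 1/p)^(N-2) \<ge> 1 - real N / \<phi>" using pp ph by (intro bern_bound) auto
        hence h1: "(1/p)^2 * (1 - real N / \<phi>) \<le> (1/p)^2 * (1 - 1/p)^(N-2)" by (intro mult_left_mono) auto
        have h2: "real N * (real N - 1) / 2 \<ge> 0" using N1 by simp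
        have "(real N * (real N - 1) / 2) * ((1/p)^2 * (1 - real N / \<phi>)) \<le> (real N * (real N - 1) / 2) * ((1/p)^2 * (1 - 1/p)^(N-2))"
          using mult_left_mono[OF h1 h2] .
        thus "(real N * (real N - 1) / 2) * (1 - real N / \<phi>) * (1/(real (pr i))^2) \<le> sval N i"
          unfolding sv p_def[symmetric] by (simp add: power_divide mult.commute mult.left_commute)
      qed
      finally show ?thesis .
    qed
    have A: "real a * ln (real a) \<le> (11/10) * (\<phi> * ln \<phi>)"
    proof -
      have "real a * ln (real a) \<le> (\<phi> + 1) * ln (\<phi> + 1)" using ar ph by (intro mult_mono) auto
      also have "\<dots> \<le> (11/10) * (\<phi> * ln \<phi>)" using \<phi>1 ph1 by simp
      finally show ?thesis .
    qed
    have dU: "\<delta> \<le> (real N)^2 / (4 * (\<phi> * ln \<phi>))" using I_upper[of \<phi> N] ph by (simp add: mult.assoc)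
    have "S \<ge> \<delta>"
      by (rule final_ineq[OF _ elim(4) phN _ apos A Sb dU]) (use ph Qb Q_def in auto)
    hence "1 - exp (- S) \<ge> 1 - exp (- \<delta>)" by simp
    hence "measure (M N) {\<omega> \<in> space (M N). ereal (ln \<phi>) \<le> DeltaN' N (Z N) \<omega>} \<ge> 1 - exp (- \<delta>)"
      using mp unfolding S_def by linarith
    thus ?case unfolding \<phi>_def by simp
  qed
  thus ?thesis by (rule Liminf_bounded)
qed

end
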